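(* Let $n\ge 2$, let $\gamma: I\to S^n$ be a spherical unit speed curve, let $P\in S^n$ and let $s_0\in I$. Then: (1) If $P\neq \pm\mathbf{u}_n(s_0)$, then the spherical pedal curve-germ $ped_{\gamma,P}:(I,s_0)\to S^n$ is well-defined and the spherical orthotomic curve-germ $ort_{\gamma,P}:(I,s_0)\to S^n$ is $\mathcal{L}$-equivalent to it. (If $P=\pm\mathbf{u}_n(s_0)$, the germ $ped_{\gamma,P}$ at $s_0$ is not defined.) (2) If $P=\pm\mathbf{u}_n(s_0)$, then $ort_{\gamma,P}:(I,s_0)\to S^n$ is $\mathcal{L}$-equivalent to the spherical dual curve-germ $\mathbf{u}_n:(I,s_0)\to S^n$.
   Context: $I\subset\mathbb{R}$ is an open interval and $S^n$ the unit sphere in $\mathbb{R}^{n+1}$; the dot denotes the Euclidean inner product. A regular curve $\gamma:I\to S^n$ is a spherical unit speed curve if, setting $\mathbf{u}_{-1}\equiv\mathbf{0}$, $\mathbf{u}_0=\gamma$, $\|\mathbf{u}_0'\|\equiv 1$, $\kappa_0\equiv 0$, the maps $\mathbf{u}_i(s)=\dfrac{\mathbf{u}_{i-1}'(s)+\kappa_{i-1}(s)\mathbf{u}_{i-2}(s)}{\|\mathbf{u}_{i-1}'(s)+\kappa_{i-1}(s)\mathbf{u}_{i-2}(s)\|}$ with $\kappa_i(s)=\|\mathbf{u}_{i-1}'(s)+\kappa_{i-1}(s)\mathbf{u}_{i-2}(s)\|>0$ are well-defined for $1\le i\le n-1$ and all $s\in I$. Then $\mathbf{u}_0(s),\dots,\mathbf{u}_{n-1}(s)$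 are orthonormal, and the spherical dual curve $\mathbf{u}_n:I\to S^n$ is defined by requiring $\mathbf{u}_0(s),\dots,\mathbf{u}_n(s)$ orthonormal with $\det(\mathbf{u}_0(s),\dots,\mathbf{u}_n(s))=1$; also $\kappa_n(s)=\mathbf{u}_{n-1}'(s)\cdot\mathbf{u}_n(s)$. For $P\in S^n$ with $P\cdot\mathbf{u}_n(s)\neq\pm1$, the spherical pedal curve is $ped_{\gamma,P}(s)=\dfrac{P-(P\cdot\mathbf{u}_n(s))\mathbf{u}_n(s)}{\sqrt{1-(P\cdot\mathbf{u}_n(s))^2}}$ (equivalently the normalization of $\sum_{i=0}^{n-1}(P\cdot\mathbf{u}_i(s))\mathbf{u}_i(s)$). For any $P\in S^n$ the spherical orthotomic curve is $ort_{\gamma,P}(s)=\sum_{i=0}^{n-1}(P\cdot\mathbf{u}_i(s))\mathbf{u}_i(s)-(P\cdot\mathbf{u}_n(s))\mathbf{u}_n(s)=P-2(P\cdot\mathbf{u}_n(s))\mathbf{u}_n(s)$. Two curve-germs $f,g:(I,s_0)\to S^n$ are $\mathcal{L}$-equivalent if there is a germ of $C^\infty$ diffeomorphism $\psi:(S^n,f(s_0))\to(S^n,g(s_0))$ with $g=\psi\circ f$ as germs. *)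

theory Defs
  imports "HOL-Analysis.Analysis"
begin

fun Ck_on :: "nat \<Rightarrow> 'a::real_normed_vector set \<Rightarrow> ('a \<Rightarrow> 'b::real_normed_vector) \<Rightarrow> bool" where
  "Ck_on 0 U f = continuous_on U f"
| "Ck_on (Suc k) U f =
     (f differentiable_on U \<and> (\<forall>v. Ck_on k U (\<lambda>x. frechet_derivative f (at x) v)))"

definition smooth_on :: "'a::real_normed_vector set \<Rightarrow> ('a \<Rightarrow> 'b::real_normed_vector) \<Rightarrow> bool" where
  "smooth_on U f \<longleftrightarrow> (\<forall>k. Ck_on k U f)"

(* Recursive Frenet-type construction.  frame_aux \<gamma> i = (u_{i-1}, u_i, \<kappa>_i) *)
fun frame_aux :: "(real \<Rightarrow> real^'n) \<Rightarrow> nat \<Rightarrow>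
    (real \<Rightarrow> real^'n) \<times> (real \<Rightarrow> real^'n) \<times> (real \<Rightarrow> real)" where
  "frame_aux \<gamma> 0 = ((\<lambda>s. 0), \<gamma>, (\<lambda>s. 0))"
| "frame_aux \<gamma> (Suc i) =
     (let (a, b, k) = frame_aux \<gamma> i;
          w = (\<lambda>s. vector_derivative b (at s) + k s *\<^sub>R a s)
      in (b, (\<lambda>s. (1 / norm (w s)) *\<^sub>R w s), (\<lambda>s. norm (w s))))"

definition frame_u :: "(real \<Rightarrow> real^'n) \<Rightarrow> nat \<Rightarrow> real \<Rightarrow> real^'n" where
  "frame_u \<gamma> i = fst (snd (frame_aux \<gamma> i))"

definition frame_kappa :: "(real \<Rightarrow> real^'n) \<Rightarrow> nat \<Rightarrow> real \<Rightarrow> real" where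
  "frame_kappa \<gamma> i = snd (snd (frame_aux \<gamma> i))"

(* Determinant of the (n+1)x(n+1) matrix whose k-th column is v k, coordinates of
   R^{n+1} being listed in the order e 0, ..., e n  (e : {0..n} -> 'n a bijection) *)
definition frame_det :: "(nat \<Rightarrow> 'n::finite) \<Rightarrow> (nat \<Rightarrow> real^'n) \<Rightarrow> real" where
  "frame_det e v = det (\<chi> i j. v (inv_into {0..<CARD('n)} e j) $ i)"

definition spherical_unit_speed_curve ::
    "nat \<Rightarrow> real set \<Rightarrow> (real \<Rightarrow> real^'n::finite) \<Rightarrow> bool" where
  "spherical_unit_speed_curve n I \<gamma> \<longleftrightarrow>
     smooth_on I \<gamma> \<and>
     (\<forall>s\<in>I. norm (\<gamma> s) = 1 \<and> norm (vector_derivative \<gamma> (at s)) = 1) \<and>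
     (\<forall>i\<in>{1..n-1}. \<forall>s\<in>I. frame_kappa \<gamma> i s > 0)"

definition dual_curve :: "(nat \<Rightarrow> 'n::finite) \<Rightarrow> nat \<Rightarrow> (real \<Rightarrow> real^'n) \<Rightarrow> real \<Rightarrow> real^'n" where
  "dual_curve e n \<gamma> s =
     (THE v. norm v = 1 \<and> (\<forall>i<n. frame_u \<gamma> i s \<bullet> v = 0) \<and>
             frame_det e (\<lambda>k. if k = n then v else frame_u \<gamma> k s) = 1)"

definition pedal :: "(nat \<Rightarrow> 'n::finite) \<Rightarrow> nat \<Rightarrow> (real \<Rightarrow> real^'n) \<Rightarrow> real^'n \<Rightarrow> real \<Rightarrow> real^'n" where
  "pedal e n \<gamma> P s =
     (let un = dual_curve e n \<gamma> s
      in (1 / sqrt (1 - (P \<bullet> un)\<^sup>2)) *\<^sub>R (P - (P \<bullet> un) *\<^sub>R un))"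

definition orthotomic :: "(nat \<Rightarrow> 'n::finite) \<Rightarrow> nat \<Rightarrow> (real \<Rightarrow> real^'n) \<Rightarrow> real^'n \<Rightarrow> real \<Rightarrow> real^'n" where
  "orthotomic e n \<gamma> P s =
     (let un = dual_curve e n \<gamma> s in P - (2 * (P \<bullet> un)) *\<^sub>R un)"

(* A germ of C^\<infinity> diffeomorphism (S^n, p) -> (S^n, q): restriction to the sphere of
   ambient smooth maps, with a smooth inverse germ on the sphere. *)
definition sphere_diffeo_germ :: "(real^'n::finite \<Rightarrow> real^'n) \<Rightarrow> real^'n \<Rightarrow> real^'n \<Rightarrow> bool" where
  "sphere_diffeo_germ \<psi> p q \<longleftrightarrow>
     (\<exists>U V \<phi>. open U \<and> open V \<and> p \<in> U \<and> q \<in> V \<and>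
        smooth_on U \<psi> \<and> smooth_on V \<phi> \<and>
        \<psi> p = q \<and> \<phi> q = p \<and>
        \<psi> ` (U \<inter> sphere 0 1) \<subseteq> V \<inter> sphere 0 1 \<and>
        \<phi> ` (V \<inter> sphere 0 1) \<subseteq> U \<inter> sphere 0 1 \<and>
        (\<forall>x\<in>U \<inter> sphere 0 1. \<phi> (\<psi> x) = x) \<and>
        (\<forall>y\<in>V \<inter> sphere 0 1. \<psi> (\<phi> y) = y))"

definition L_equivalent_germs :: "(real \<Rightarrow> real^'n::finite) \<Rightarrow> (real \<Rightarrow> real^'n) \<Rightarrow> real \<Rightarrow> bool" where
  "L_equivalent_germs f g s0 \<longleftrightarrow>
     (\<exists>\<psi>. sphere_diffeo_germ \<psi> (f s0) (g s0) \<and>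
          (\<exists>\<epsilon>>0. \<forall>s\<in>ball s0 \<epsilon>. g s = \<psi> (f s)))"

end

theory Submission
  imports Defs
begin


lemma Ck_cong:
  assumes "open U" "\<And>x. x\<in>U \<Longrightarrow> f x = g x" "Ck_on k U f"
  shows "Ck_on k U g"
  using assms
proof (induction k arbitrary: f g)
  case 0 thus ?case using continuous_on_cong by (metis Ck_on.simps(1))
next
  case (Suc k)
  have d: "f differentiable_on U" using Suc by simp
  have dg: "g differentiable_on U"
    unfolding differentiable_on_eq_differentiable_at[OF Suc.prems(1)]
  proof
    fix x assume x: "x \<in> U"
    then have "f differentiable at x" using d Suc.prems(1) differentiable_on_eq_differentiable_at by blast
    then obtain f' where "(f has_derivative f') (at x)" by (auto simp: differentiable_def)
    then have "(g has_derivative f') (at x)"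
      by (rule has_derivative_transform_within_open[OF _ Suc.prems(1) x]) (use Suc.prems(2) in auto)
    then show "g differentiable at x" by (auto simp: differentiable_def)
  qed
  have "Ck_on k U (\<lambda>x. frechet_derivative g (at x) v)" for v
  proof (rule Suc.IH[OF Suc.prems(1) _ ])
    show "Ck_on k U (\<lambda>x. frechet_derivative f (at x) v)" using Suc.prems by simp
    fix x assume "x\<in>U"
    then show "frechet_derivative f (at x) v = frechet_derivative g (at x) v"
      using frechet_derivative_transform_within_open[of f x U g] d Suc.prems
      by (simp add: differentiable_on_eq_differentiable_at)
  qed
  then show ?case using dg by simp
qed

lemma Ck_mono: "Ck_on (Suc k) U f \<Longrightarrow> Ck_on k U f"
proof (induction k arbitrary: f)
  case 0 thus ?case by (simp add: differentiable_imp_continuous_on)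
next
  case (Suc k) thus ?case by simp
qed

lemma Ck_mono_le: "Ck_on m U f \<Longrightarrow> k \<le> m \<Longrightarrow> Ck_on k U f"
proof (induction m)
  case 0 thus ?case by simp
next
  case (Suc m)
  show ?case
  proof (cases "k = Suc m")
    case True thus ?thesis using Suc by simp
  next
    case False thus ?thesis using Suc Ck_mono[of m U f] by simp
  qed
qed

lemma Ck_SucI:
  assumes "open U" "\<And>x. x\<in>U \<Longrightarrow> (F has_derivative F' x) (at x)"
    "\<And>v. Ck_on k U (\<lambda>x. F' x v)"
  shows "Ck_on (Suc k) U F"
proof -
  have "F differentiable_on U"
    using assms by (meson differentiableI differentiable_at_imp_differentiable_on)
  moreover have "Ck_on k U (\<lambda>x. frechet_derivative F (at x) v)" for v
    by (rule Ck_cong[OF assms(1) _ assms(3)[of v]])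
       (use assms(2) frechet_derivative_at in metis)
  ultimately show ?thesis by simp
qed

lemma Ck_SucD:
  assumes "open U" "Ck_on (Suc k) U f" "x \<in> U"
  shows "(f has_derivative frechet_derivative f (at x)) (at x)"
  using assms by (metis Ck_on.simps(2) differentiable_on_eq_differentiable_at frechet_derivative_works)

lemma Ck_Suc_deriv: "Ck_on (Suc k) U f \<Longrightarrow> Ck_on k U (\<lambda>x. frechet_derivative f (at x) v)"
  by simp

lemma Ck_const: "open U \<Longrightarrow> Ck_on k U (\<lambda>x. c)"
proof (induction k arbitrary: c)
  case 0 thus ?case by simp
next
  case (Suc k)
  show ?case by (rule Ck_SucI[where F'="\<lambda>x v. 0"]) (auto intro: Suc derivative_eq_intros)
qed

lemma Ck_linear: assumes "open U" "bounded_linear L" shows "Ck_on k U L"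
proof (cases k)
  case 0 thus ?thesis
    by (simp add: linear_continuous_on assms)
next
  case (Suc m)
  show ?thesis unfolding Suc
    by (rule Ck_SucI[where F'="\<lambda>x v. L v"])
       (auto intro: Ck_const \<open>open U\<close> bounded_linear.has_derivative[OF \<open>bounded_linear L\<close>] has_derivative_ident)
qed

lemma Ck_ident: "open U \<Longrightarrow> Ck_on k U (\<lambda>x. x)"
  by (rule Ck_linear) (simp_all add: bounded_linear_ident)

lemma Ck_add: "open U \<Longrightarrow> Ck_on k U f \<Longrightarrow> Ck_on k U g \<Longrightarrow> Ck_on k U (\<lambda>x. f x + g x)"
proof (induction k arbitrary: f g)
  case 0 thus ?case by (simp add: continuous_on_add)
next
  case (Suc k)
  show ?case
    apply (rule Ck_SucI[where F'="\<lambda>x v. frechet_derivative f (at x) v + frechet_derivative g (at x) v"])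
      apply (rule Suc.prems)
     apply (rule has_derivative_add[OF Ck_SucD Ck_SucD]; (rule Suc.prems)?; assumption)
    apply (rule Suc.IH; (rule Suc.prems)?)
     apply (rule Ck_Suc_deriv, rule Suc.prems)+
    done
qed

lemma Ck_scaleR: "open U \<Longrightarrow> Ck_on k U f \<Longrightarrow> Ck_on k U g \<Longrightarrow> Ck_on k U (\<lambda>x. f x *\<^sub>R g x)"
proof (induction k arbitrary: f g)
  case 0 thus ?case by (simp add: continuous_on_scaleR)
next
  case (Suc k)
  show ?case
    apply (rule Ck_SucI[where F'="\<lambda>x v. f x *\<^sub>R frechet_derivative g (at x) v + frechet_derivative f (at x) v *\<^sub>R g x"])
      apply (rule Suc.prems)
     apply (rule has_derivative_scaleR[OF Ck_SucD Ck_SucD]; (rule Suc.prems)?; assumption)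
    apply (rule Ck_add, rule Suc.prems)
     apply (rule Suc.IH, rule Suc.prems, rule Ck_mono, rule Suc.prems, rule Ck_Suc_deriv, rule Suc.prems)
    apply (rule Suc.IH, rule Suc.prems, rule Ck_Suc_deriv, rule Suc.prems, rule Ck_mono, rule Suc.prems)
    done
qed

lemma Ck_inner: "open U \<Longrightarrow> Ck_on k U f \<Longrightarrow> Ck_on k U g \<Longrightarrow> Ck_on k U (\<lambda>x. f x \<bullet> g x)"
proof (induction k arbitrary: f g)
  case 0 thus ?case by (simp add: continuous_on_inner)
next
  case (Suc k)
  show ?case
    apply (rule Ck_SucI[where F'="\<lambda>x v. f x \<bullet> frechet_derivative g (at x) v + frechet_derivative f (at x) v \<bullet> g x"])
      apply (rule Suc.prems)
     apply (rule has_derivative_inner[OF Ck_SucD Ck_SucD]; (rule Suc.prems)?; assumption)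
    apply (rule Ck_add, rule Suc.prems)
     apply (rule Suc.IH, rule Suc.prems, rule Ck_mono, rule Suc.prems, rule Ck_Suc_deriv, rule Suc.prems)
    apply (rule Suc.IH, rule Suc.prems, rule Ck_Suc_deriv, rule Suc.prems, rule Ck_mono, rule Suc.prems)
    done
qed

lemma Ck_mult: "open U \<Longrightarrow> Ck_on k U f \<Longrightarrow> Ck_on k U g \<Longrightarrow> Ck_on k U (\<lambda>x. (f x::real) * g x)"
  using Ck_scaleR[of U k f g] by simp

lemma Ck_minus: "open U \<Longrightarrow> Ck_on k U f \<Longrightarrow> Ck_on k U (\<lambda>x. - f x)"
  using Ck_scaleR[of U k "\<lambda>x. -1" f] Ck_const[of U k "-1"] by simp

lemma Ck_diff: "open U \<Longrightarrow> Ck_on k U f \<Longrightarrow> Ck_on k U g \<Longrightarrow> Ck_on k U (\<lambda>x. f x - g x)"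
  using Ck_add[OF _ _ Ck_minus, of U k f g] by simp

lemma Ck_inverse:
  "open U \<Longrightarrow> Ck_on k U h \<Longrightarrow> (\<And>x. x\<in>U \<Longrightarrow> h x \<noteq> (0::real)) \<Longrightarrow> Ck_on k U (\<lambda>x. inverse (h x))"
proof (induction k arbitrary: h)
  case 0 thus ?case by (simp add: continuous_on_inverse)
next
  case (Suc k)
  have ih: "Ck_on k U (\<lambda>x. inverse (h x))"
    by (rule Suc.IH[OF Suc.prems(1) Ck_mono[OF Suc.prems(2)] Suc.prems(3)])
  have der: "((\<lambda>x. inverse (h x)) has_derivative (\<lambda>v. - (inverse (h x) * frechet_derivative h (at x) v * inverse (h x)))) (at x)"
    if "x \<in> U" for x
    using Deriv.has_derivative_inverse[OF Suc.prems(3)[OF that] Ck_SucD[OF Suc.prems(1,2) that]] .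
  have "Ck_on k U (\<lambda>x. - (inverse (h x) * frechet_derivative h (at x) v * inverse (h x)))" for v
    using Ck_minus[OF Suc.prems(1) Ck_mult[OF Suc.prems(1) Ck_mult[OF Suc.prems(1) ih Ck_Suc_deriv[OF Suc.prems(2)]] ih]] .
  then show ?case using Ck_SucI[OF Suc.prems(1) der] by blast
qed

lemma Ck_sqrt:
  "open U \<Longrightarrow> Ck_on k U h \<Longrightarrow> (\<And>x. x\<in>U \<Longrightarrow> h x > (0::real)) \<Longrightarrow> Ck_on k U (\<lambda>x. sqrt (h x))"
proof (induction k arbitrary: h)
  case 0 thus ?case by (simp add: continuous_on_real_sqrt)
next
  case (Suc k)
  have ih: "Ck_on k U (\<lambda>x. sqrt (h x))"
    by (rule Suc.IH[OF Suc.prems(1) Ck_mono[OF Suc.prems(2)] Suc.prems(3)])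
  have ih2: "Ck_on k U (\<lambda>x. inverse (sqrt (h x)))"
  proof (rule Ck_inverse[OF Suc.prems(1) ih])
    fix x assume "x \<in> U" then have "h x > 0" by (rule Suc.prems(3))
    then show "sqrt (h x) \<noteq> 0" by simp
  qed
  have der: "((\<lambda>x. sqrt (h x)) has_derivative (\<lambda>v. inverse (sqrt (h x)) / 2 * frechet_derivative h (at x) v)) (at x)"
    if "x \<in> U" for x
  proof -
    have "(sqrt has_real_derivative inverse (sqrt (h x)) / 2) (at (h x))"
      using Suc.prems(3)[OF that] by (intro DERIV_real_sqrt) auto
    note d = this[unfolded has_field_derivative_def]
    have e: "(\<lambda>v. inverse (sqrt (h x)) / 2 * frechet_derivative h (at x) v) = ((*) (inverse (sqrt (h x)) / 2)) \<circ> frechet_derivative h (at x)"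
      by (rule ext) (simp only: o_def)
    have e2: "(\<lambda>x. sqrt (h x)) = sqrt \<circ> h" by (rule ext) simp
    show ?thesis unfolding e e2 by (rule diff_chain_at[OF Ck_SucD[OF Suc.prems(1,2) that] d])
  qed
  have c2: "Ck_on k U (\<lambda>x. inverse (sqrt (h x)) / 2)"
    by (rule Ck_cong[OF Suc.prems(1) _ Ck_mult[OF Suc.prems(1) ih2 Ck_const[of U k "1/2", OF Suc.prems(1)]]])
       (simp only: times_divide_eq_right mult_1_right)
  have "Ck_on k U (\<lambda>x. inverse (sqrt (h x)) / 2 * frechet_derivative h (at x) v)" for v
    using Ck_mult[OF Suc.prems(1) c2 Ck_Suc_deriv[OF Suc.prems(2)]] .
  then show ?case using Ck_SucI[OF Suc.prems(1) der] by blast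
qed



lemma smooth_Ck: "smooth_on U f \<Longrightarrow> Ck_on k U f" by (simp add: smooth_on_def)

lemma smooth_add: "open U \<Longrightarrow> smooth_on U f \<Longrightarrow> smooth_on U g \<Longrightarrow> smooth_on U (\<lambda>x. f x + g x)"
  by (simp add: smooth_on_def Ck_add)
lemma smooth_diff: "open U \<Longrightarrow> smooth_on U f \<Longrightarrow> smooth_on U g \<Longrightarrow> smooth_on U (\<lambda>x. f x - g x)"
  by (simp add: smooth_on_def Ck_diff)
lemma smooth_scaleR: "open U \<Longrightarrow> smooth_on U f \<Longrightarrow> smooth_on U g \<Longrightarrow> smooth_on U (\<lambda>x. f x *\<^sub>R g x)"
  by (simp add: smooth_on_def Ck_scaleR)
lemma smooth_mult: "open U \<Longrightarrow> smooth_on U f \<Longrightarrow> smooth_on U g \<Longrightarrow> smooth_on U (\<lambda>x. (f x::real) * g x)"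
  by (simp add: smooth_on_def Ck_mult)
lemma smooth_inner: "open U \<Longrightarrow> smooth_on U f \<Longrightarrow> smooth_on U g \<Longrightarrow> smooth_on U (\<lambda>x. f x \<bullet> g x)"
  by (simp add: smooth_on_def Ck_inner)
lemma smooth_const: "open U \<Longrightarrow> smooth_on U (\<lambda>x. c)"
  by (simp add: smooth_on_def Ck_const)
lemma smooth_ident: "open U \<Longrightarrow> smooth_on U (\<lambda>x. x)"
  by (simp add: smooth_on_def Ck_ident)
lemma smooth_inverse: "open U \<Longrightarrow> smooth_on U h \<Longrightarrow> (\<And>x. x\<in>U \<Longrightarrow> h x \<noteq> (0::real)) \<Longrightarrow> smooth_on U (\<lambda>x. inverse (h x))"
  by (simp add: smooth_on_def Ck_inverse)
lemma smooth_sqrt: "open U \<Longrightarrow> smooth_on U h \<Longrightarrow> (\<And>x. x\<in>U \<Longrightarrow> h x > (0::real)) \<Longrightarrow> smooth_on U (\<lambda>x. sqrt (h x))"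
  by (simp add: smooth_on_def Ck_sqrt)
lemma smooth_cong: "open U \<Longrightarrow> (\<And>x. x\<in>U \<Longrightarrow> f x = g x) \<Longrightarrow> smooth_on U f \<Longrightarrow> smooth_on U g"
  unfolding smooth_on_def using Ck_cong by blast
lemma smooth_continuous: "smooth_on U f \<Longrightarrow> continuous_on U f"
  using smooth_Ck[of U f 0] by simp

lemma smooth_vd:
  fixes f :: "real \<Rightarrow> 'b::real_normed_vector"
  assumes "open U" "smooth_on U f" "s \<in> U"
  shows "(f has_vector_derivative vector_derivative f (at s)) (at s)"
  using Ck_SucD[OF assms(1) smooth_Ck[OF assms(2)] assms(3)]
  by (metis differentiableI vector_derivative_works)

lemma smooth_deriv:
  fixes f :: "real \<Rightarrow> 'b::real_normed_vector"
  assumes "open U" "smooth_on U f"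
  shows "smooth_on U (\<lambda>s. vector_derivative f (at s))"
  unfolding smooth_on_def
proof
  fix k
  have "Ck_on k U (\<lambda>x. frechet_derivative f (at x) 1)"
    using smooth_Ck[OF assms(2), of "Suc k"] by simp
  then show "Ck_on k U (\<lambda>s. vector_derivative f (at s))"
  proof (rule Ck_cong[OF assms(1), rotated])
    fix x assume "x \<in> U"
    then have "f differentiable at x"
      using Ck_SucD[OF assms(1) smooth_Ck[OF assms(2)]] differentiableI by blast
    then show "frechet_derivative f (at x) 1 = vector_derivative f (at x)"
      by (simp add: frechet_derivative_eq_vector_derivative)
  qed
qed

definition "Wv \<gamma> i s = vector_derivative (frame_u \<gamma> i) (at s) + frame_kappa \<gamma> i s *\<^sub>R fst (frame_aux \<gamma> i) s"

lemma frame_aux_Suc':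
  "frame_aux \<gamma> (Suc i) = (frame_u \<gamma> i, (\<lambda>s. (1 / norm (Wv \<gamma> i s)) *\<^sub>R Wv \<gamma> i s), (\<lambda>s. norm (Wv \<gamma> i s)))"
  by (simp add: frame_u_def frame_kappa_def Wv_def split_beta Let_def)

declare frame_aux.simps(2)[simp del]

lemma pr_Suc: "fst (frame_aux \<gamma> (Suc i)) = frame_u \<gamma> i"
  by (simp only: frame_aux_Suc' fst_conv)
lemma u_Suc: "frame_u \<gamma> (Suc i) s = (1 / norm (Wv \<gamma> i s)) *\<^sub>R Wv \<gamma> i s"
  unfolding frame_u_def by (simp only: frame_aux_Suc' fst_conv snd_conv)
lemma k_Suc: "frame_kappa \<gamma> (Suc i) s = norm (Wv \<gamma> i s)"
  unfolding frame_kappa_def by (simp only: frame_aux_Suc' fst_conv snd_conv)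
lemma u_0: "frame_u \<gamma> 0 = \<gamma>" by (simp add: frame_u_def)
lemma k_0: "frame_kappa \<gamma> 0 = (\<lambda>s. 0)" by (simp add: frame_kappa_def)
lemma pr_0: "fst (frame_aux \<gamma> 0) = (\<lambda>s. 0)" by simp

lemma frame_smooth:
  assumes I: "open I" and sm: "smooth_on I \<gamma>"
    and kpos: "\<forall>i\<in>{1..n-1}. \<forall>s\<in>I. frame_kappa \<gamma> i s > 0"
  shows "m < n \<Longrightarrow> smooth_on I (frame_u \<gamma> m) \<and> smooth_on I (frame_kappa \<gamma> m) \<and> smooth_on I (fst (frame_aux \<gamma> m))"
proof (induction m)
  case 0 thus ?case using sm by (auto simp: u_0 k_0 intro: smooth_const[OF I])
next
  case (Suc m)
  then have ih: "smooth_on I (frame_u \<gamma> m)" "smooth_on I (frame_kappa \<gamma> m)" "smooth_on I (fst (frame_aux \<gamma> m))"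
    by auto
  have W: "smooth_on I (Wv \<gamma> m)"
    unfolding Wv_def[abs_def]
    by (intro smooth_add smooth_scaleR smooth_deriv I ih)
  have pos: "norm (Wv \<gamma> m s) > 0" if "s \<in> I" for s
  proof -
    have "Suc m \<in> {1..n-1}" using Suc.prems by auto
    then have "frame_kappa \<gamma> (Suc m) s > 0" using kpos that by blast
    then show ?thesis by (simp add: k_Suc)
  qed
  have N: "smooth_on I (\<lambda>s. norm (Wv \<gamma> m s))"
    by (rule smooth_cong[OF I _ smooth_sqrt[OF I smooth_inner[OF I W W]]])
       (use pos in \<open>auto simp: norm_eq_sqrt_inner\<close>)
  have "smooth_on I (\<lambda>s. inverse (norm (Wv \<gamma> m s)) *\<^sub>R Wv \<gamma> m s)"
    by (intro smooth_scaleR smooth_inverse I N W) (metis pos less_irrefl)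
  then have "smooth_on I (frame_u \<gamma> (Suc m))"
    by (rule smooth_cong[OF I, rotated]) (simp add: u_Suc divide_inverse)
  moreover have "smooth_on I (frame_kappa \<gamma> (Suc m))"
    using N by (simp add: k_Suc[abs_def])
  ultimately show ?case using ih by (simp add: pr_Suc)
qed



lemma inner_deriv_zero:
  fixes f g :: "real \<Rightarrow> 'a::real_inner"
  assumes I: "open I" and s: "s \<in> I"
    and f: "(f has_vector_derivative f') (at s)" and g: "(g has_vector_derivative g') (at s)"
    and c: "\<And>t. t \<in> I \<Longrightarrow> f t \<bullet> g t = c"
  shows "f' \<bullet> g s + f s \<bullet> g' = 0"
proof -
  have "((\<lambda>t. f t \<bullet> g t) has_derivative (\<lambda>h. f s \<bullet> (h *\<^sub>R g') + (h *\<^sub>R f') \<bullet> g s)) (at s)"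
    using has_derivative_inner[OF f[unfolded has_vector_derivative_def] g[unfolded has_vector_derivative_def]] .
  moreover have "(\<lambda>h. f s \<bullet> (h *\<^sub>R g') + (h *\<^sub>R f') \<bullet> g s) = (*) (f' \<bullet> g s + f s \<bullet> g')"
    by (rule ext) (simp add: algebra_simps)
  ultimately have d1: "((\<lambda>t. f t \<bullet> g t) has_field_derivative (f' \<bullet> g s + f s \<bullet> g')) (at s)"
    by (simp add: has_field_derivative_def)
  have d2: "((\<lambda>t. f t \<bullet> g t) has_field_derivative 0) (at s)"
    by (rule has_field_derivative_transform_within_open[OF DERIV_const[of c "at s"] I s]) (simp add: c)
  show ?thesis using DERIV_unique[OF d1 d2] .
qed

locale frenet =
  fixes \<gamma> :: "real \<Rightarrow> real^'n::finite" and I :: "real set" and n :: nat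
  assumes I: "open I" and sm: "smooth_on I \<gamma>" and unit: "\<And>s. s\<in>I \<Longrightarrow> norm (\<gamma> s) = 1"
    and kpos: "\<forall>i\<in>{1..n-1}. \<forall>s\<in>I. frame_kappa \<gamma> i s > 0" and n1: "n \<ge> 1"
begin

lemma sm_u: "m < n \<Longrightarrow> smooth_on I (frame_u \<gamma> m)"
  using frame_smooth[OF I sm kpos] by blast

lemma vd: "m < n \<Longrightarrow> s \<in> I \<Longrightarrow> (frame_u \<gamma> m has_vector_derivative vector_derivative (frame_u \<gamma> m) (at s)) (at s)"
  using smooth_vd[OF I sm_u] by blast

lemma kpos': "1 \<le> i \<Longrightarrow> i < n \<Longrightarrow> s \<in> I \<Longrightarrow> frame_kappa \<gamma> i s > 0"
  using kpos by auto

lemma deriv_formula: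
  assumes "Suc j < n" "s \<in> I"
  shows "vector_derivative (frame_u \<gamma> j) (at s) =
     frame_kappa \<gamma> (Suc j) s *\<^sub>R frame_u \<gamma> (Suc j) s - frame_kappa \<gamma> j s *\<^sub>R fst (frame_aux \<gamma> j) s"
proof -
  have p: "norm (Wv \<gamma> j s) > 0" using kpos'[of "Suc j" s] assms by (simp add: k_Suc)
  have "frame_kappa \<gamma> (Suc j) s *\<^sub>R frame_u \<gamma> (Suc j) s = Wv \<gamma> j s"
    using p by (simp add: k_Suc u_Suc)
  then show ?thesis by (simp add: Wv_def)
qed

lemma ON: "m < n \<Longrightarrow> \<forall>s\<in>I. \<forall>i\<le>m. \<forall>j\<le>m. frame_u \<gamma> i s \<bullet> frame_u \<gamma> j s = (if i = j then 1 else 0)"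
proof (induction m)
  case 0
  show ?case using unit by (simp add: u_0 norm_eq_1[symmetric])
next
  case (Suc m)
  then have IH: "\<And>s i j. s \<in> I \<Longrightarrow> i \<le> m \<Longrightarrow> j \<le> m \<Longrightarrow> frame_u \<gamma> i s \<bullet> frame_u \<gamma> j s = (if i = j then 1 else 0)"
    by auto
  have mn: "Suc m < n" by fact
  have key: "frame_u \<gamma> (Suc m) s \<bullet> frame_u \<gamma> j s = 0 \<and> frame_u \<gamma> (Suc m) s \<bullet> frame_u \<gamma> (Suc m) s = 1"
    if s: "s \<in> I" and j: "j \<le> m" for s j
  proof -
    let ?u = "\<lambda>i. frame_u \<gamma> i s" and ?d = "\<lambda>i. vector_derivative (frame_u \<gamma> i) (at s)"
    let ?k = "\<lambda>i. frame_kappa \<gamma> i s" and ?p = "\<lambda>i. fst (frame_aux \<gamma> i) s"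
    have z: "?d i \<bullet> ?u j + ?u i \<bullet> ?d j = 0" if "i \<le> m" "j \<le> m" for i j
      by (rule inner_deriv_zero[OF I s vd vd, where c="if i = j then 1 else 0"])
         (use that mn s IH in auto)
    have pm: "?p m \<bullet> ?u j = (if j + 1 = m then 1 else 0)" if "j \<le> m" for j
    proof (cases m)
      case 0 thus ?thesis by simp
    next
      case (Suc m') thus ?thesis using IH[OF s, of m' j] that by (simp add: pr_Suc)
    qed
    have up: "?u m \<bullet> ?p j = 0" if "j \<le> m" for j
    proof (cases j)
      case 0 thus ?thesis by simp
    next
      case (Suc j') thus ?thesis using IH[OF s, of m j'] that by (simp add: pr_Suc)
    qed
    have W0: "Wv \<gamma> m s \<bullet> ?u j = 0" if "j \<le> m" for j
    proof (cases "j = m")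
      case True
      have "?d m \<bullet> ?u m = 0" using z[of m m] by (simp add: inner_commute)
      then show ?thesis using True pm[of m] by (simp add: Wv_def inner_add_left)
    next
      case False
      then have jm: "j < m" using that by simp
      have dj: "?d j = ?k (Suc j) *\<^sub>R ?u (Suc j) - ?k j *\<^sub>R ?p j"
        using deriv_formula[of j s] jm mn s by simp
      have "?d m \<bullet> ?u j = - (?u m \<bullet> ?d j)" using z[of m j] that by simp
      also have "\<dots> = - (?k (Suc j) * (if m = Suc j then 1 else 0))"
        using IH[OF s, of m "Suc j"] jm up[of j] by (simp add: dj inner_diff_right)
      finally have "?d m \<bullet> ?u j = - (?k (Suc j) * (if m = Suc j then 1 else 0))" .
      then show ?thesis using pm[of j] that by (auto simp: Wv_def inner_add_left)
    qed
    have p: "norm (Wv \<gamma> m s) > 0" using kpos'[of "Suc m" s] mn s by (simp add: k_Suc)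
    have "?u (Suc m) \<bullet> ?u j = 0" using W0[OF j] by (simp add: u_Suc)
    moreover have "norm (?u (Suc m)) = 1" using p by (simp add: u_Suc)
    ultimately show ?thesis by (simp add: norm_eq_1[symmetric])
  qed
  show ?case
  proof (intro ballI allI impI)
    fix s i j assume s: "s \<in> I" and i: "i \<le> Suc m" and j: "j \<le> Suc m"
    show "frame_u \<gamma> i s \<bullet> frame_u \<gamma> j s = (if i = j then 1 else 0)"
    proof (cases "i = Suc m"; cases "j = Suc m")
      assume "i = Suc m" "j = Suc m" thus ?thesis using key[OF s, of 0] by simp
    next
      assume "i = Suc m" "j \<noteq> Suc m" thus ?thesis using key[OF s, of j] j by simp
    next
      assume "i \<noteq> Suc m" "j = Suc m" thus ?thesis using key[OF s, of i] i by (simp add: inner_commute)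
    next
      assume "i \<noteq> Suc m" "j \<noteq> Suc m" thus ?thesis using IH[OF s, of i j] i j by simp
    qed
  qed
qed

end


lemma frame_det_rows:
  "frame_det e V = det (\<chi> j. V (inv_into {0..<CARD('n)} e j) :: real^'n::finite^'n)"
proof -
  have "frame_det e V = det (transpose (\<chi> i j. V (inv_into {0..<CARD('n)} e j) $ i :: real^'n^'n))"
    by (simp add: frame_det_def)
  also have "transpose (\<chi> i j. V (inv_into {0..<CARD('n)} e j) $ i :: real^'n^'n) = (\<chi> j. V (inv_into {0..<CARD('n)} e j))"
    by (simp add: transpose_def vec_eq_iff)
  finally show ?thesis .
qed

lemma cont_frame_det:
  assumes "\<And>k. continuous F (\<lambda>s. W s k)"
  shows "continuous F (\<lambda>s. frame_det e (W s :: nat \<Rightarrow> real^'n::finite))"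
  unfolding frame_det_def det_def vec_lambda_beta
  by (intro continuous_intros continuous_component assms)

definition "Vx n v w = (\<lambda>k. if k = n then w else v k)"
definition "orthox n v w \<longleftrightarrow> norm w = 1 \<and> (\<forall>i<n. v i \<bullet> w = 0)"

lemma frame_det_cong:
  assumes card: "CARD('n) = n + 1" and bij: "bij_betw e {0..n} (UNIV :: 'n::finite set)"
    and eq: "\<And>k. k \<le> n \<Longrightarrow> W k = W' k"
  shows "frame_det e W = frame_det e W'"
proof -
  have "inv_into {0..<CARD('n)} e j \<le> n" for j
    using bij_betw_inv_into[OF bij] card by (auto simp: bij_betw_def atLeastLessThanSuc_atLeastAtMost)
  then show ?thesis unfolding frame_det_def using eq by simp
qed

locale linalg =
  fixes e :: "nat \<Rightarrow> 'n::finite" and n :: nat and v :: "nat \<Rightarrow> real^'n"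
  assumes card: "CARD('n) = n + 1" and bij: "bij_betw e {0..n} (UNIV :: 'n set)"
    and on: "\<And>i j. i < n \<Longrightarrow> j < n \<Longrightarrow> v i \<bullet> v j = (if i = j then 1 else 0)"
begin

abbreviation "V \<equiv> Vx n v"
abbreviation "ortho \<equiv> orthox n v"
definition "ie = inv_into {0..<CARD('n)} e"

lemma ie_bij: "bij_betw ie UNIV {0..n}"
  unfolding ie_def using bij_betw_inv_into[OF bij] card by (simp add: atLeastLessThanSuc_atLeastAtMost)

lemma ie_le: "ie j \<le> n" using ie_bij by (auto simp: bij_betw_def)
lemma ie_inj: "ie a = ie b \<longleftrightarrow> a = b" using ie_bij by (auto simp: bij_betw_def inj_on_def)
lemma ie_n: "ie j = n \<longleftrightarrow> j = e n"
proof -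
  have "ie (e n) = n" unfolding ie_def using bij card
    by (simp add: bij_betw_def inv_into_f_f atLeastLessThanSuc_atLeastAtMost)
  then show ?thesis using ie_inj by metis
qed

lemma V_on: "ortho w \<Longrightarrow> k \<le> n \<Longrightarrow> l \<le> n \<Longrightarrow> V w k \<bullet> V w l = (if k = l then 1 else 0)"
  by (auto simp: Vx_def orthox_def on inner_commute norm_eq_1)

lemma det_pm: assumes "ortho w" shows "frame_det e (V w) = 1 \<or> frame_det e (V w) = -1"
proof -
  let ?Q = "(\<chi> i j. V w (ie j) $ i) :: real^'n^'n"
  have "transpose ?Q ** ?Q = mat 1"
    using V_on[OF assms ie_le ie_le]
    by (simp add: vec_eq_iff matrix_matrix_mult_def transpose_def mat_def inner_vec_def ie_inj)
  then have "orthogonal_matrix ?Q" by (simp add: orthogonal_matrix)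
  from det_orthogonal_matrix[OF this] show ?thesis by (simp add: frame_det_def ie_def)
qed

lemma det_neg: "frame_det e (V (- w)) = - frame_det e (V w)"
proof -
  have "frame_det e (V (- w)) = det (\<chi> j. if j = e n then (-1) *s w else V w (ie j))"
    unfolding frame_det_rows ie_def[symmetric]
    by (rule arg_cong[where f=det]) (auto simp: vec_eq_iff Vx_def ie_n scalar_mult_eq_scaleR)
  also have "\<dots> = - det (\<chi> j. if j = e n then w else V w (ie j))"
    using det_row_mul[of "e n" "-1" "\<lambda>j. w" "\<lambda>j. V w (ie j)"] by simp
  also have "(\<chi> j. if j = e n then w else V w (ie j)) = (\<chi> j. V w (ie j))"
    by (auto simp: vec_eq_iff Vx_def ie_n)
  finally show ?thesis unfolding frame_det_rows ie_def .
qed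

lemma ortho_unique:
  assumes w: "ortho w" and w': "ortho w'"
  shows "w' = w \<or> w' = - w"
proof -
  let ?B = "V w ` {0..n}"
  have inj: "inj_on (V w) {0..n}"
  proof (rule inj_onI)
    fix k l assume "k \<in> {0..n}" "l \<in> {0..n}" "V w k = V w l"
    then show "k = l" using V_on[OF w, of k k] V_on[OF w, of k l] by (auto split: if_splits)
  qed
  have cB: "card ?B = n + 1" using card_image[OF inj] by simp
  have po: "pairwise orthogonal ?B"
    unfolding pairwise_def orthogonal_def using V_on[OF w] by auto
  have n0: "0 \<notin> ?B" using V_on[OF w] by force
  have ind: "independent ?B" by (rule pairwise_orthogonal_independent[OF po n0])
  have "UNIV \<subseteq> span ?B"
    by (rule card_ge_dim_independent[OF _ ind]) (simp_all add: cB card)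
  then have sp: "w' - (w' \<bullet> w) *\<^sub>R w \<in> span ?B" by blast
  have "orthogonal (w' - (w' \<bullet> w) *\<^sub>R w) b" if "b \<in> ?B" for b
  proof -
    from that obtain k where k: "k \<le> n" "b = V w k" by auto
    show ?thesis
    proof (cases "k = n")
      case True thus ?thesis using k w by (simp add: Vx_def orthogonal_def inner_diff_left orthox_def norm_eq_1)
    next
      case False
      then have "k < n" using k by simp
      then have "w \<bullet> v k = 0" "w' \<bullet> v k = 0" using w w' by (auto simp: orthox_def inner_commute)
      thus ?thesis using k False by (simp add: Vx_def orthogonal_def inner_diff_left)
    qed
  qed
  from orthogonal_to_span[OF sp this] have "w' - (w' \<bullet> w) *\<^sub>R w = 0"
    by (simp add: orthogonal_def)
  then have eq: "w' = (w' \<bullet> w) *\<^sub>R w" by simp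
  then have "norm w' = \<bar>w' \<bullet> w\<bar> * norm w" by (metis norm_scaleR)
  then have "\<bar>w' \<bullet> w\<bar> = 1" using w w' by (simp add: orthox_def)
  then show ?thesis using eq by (cases "w' \<bullet> w \<ge> 0") auto
qed

lemma ortho_exists: "\<exists>w. ortho w"
proof -
  let ?S = "v ` {..<n}"
  have "dim ?S \<le> card ?S" by (rule dim_le_card) (auto intro: span_base)
  also have "\<dots> \<le> n" using card_image_le[of "{..<n}" v] by simp
  finally have dS: "dim ?S < DIM(real^'n)" using card by simp
  then obtain x where x: "x \<noteq> 0" "\<And>y. y \<in> span ?S \<Longrightarrow> orthogonal x y"
    using orthogonal_to_subspace_exists[OF dS] by blast
  have "ortho ((1 / norm x) *\<^sub>R x)"
  proof -
    have "x \<bullet> v i = 0" if "i<n" for i using x(2)[OF span_base[of "v i"]] that by (auto simp: orthogonal_def)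
    then show ?thesis unfolding orthox_def using x(1) by (auto simp: inner_commute)
  qed
  then show ?thesis ..
qed

lemma ex1: "\<exists>!w. ortho w \<and> frame_det e (V w) = 1"
proof -
  obtain w where w: "ortho w" using ortho_exists by blast
  have wn: "ortho (- w)" using w by (simp add: orthox_def)
  obtain w0 where w0: "ortho w0" "frame_det e (V w0) = 1"
    using det_pm[OF w] det_neg[of w] w wn by (metis minus_minus)
  show ?thesis
  proof (rule ex1I[of _ w0])
    show "ortho w0 \<and> frame_det e (V w0) = 1" using w0 by simp
    fix y assume y: "ortho y \<and> frame_det e (V y) = 1"
    then have "y = w0 \<or> y = - w0" using ortho_unique[OF w0(1)] by blast
    then show "y = w0" using y w0 det_neg[of w0] by auto
  qed
qed

end


locale setting = frenet \<gamma> I n for \<gamma> :: "real \<Rightarrow> real^'n::finite" and I n +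
  fixes e :: "nat \<Rightarrow> 'n"
  assumes card: "CARD('n) = n + 1" and bij: "bij_betw e {0..n} (UNIV :: 'n set)"
begin

lemma lin: "s \<in> I \<Longrightarrow> linalg e n (\<lambda>i. frame_u \<gamma> i s)"
  unfolding linalg_def using card bij ON[of "n - 1"] n1 by auto

lemma dual_eq: "dual_curve e n \<gamma> s = (THE w. orthox n (\<lambda>i. frame_u \<gamma> i s) w \<and> frame_det e (Vx n (\<lambda>i. frame_u \<gamma> i s) w) = 1)"
  unfolding dual_curve_def orthox_def Vx_def by simp

lemma dual_ok: "s \<in> I \<Longrightarrow> orthox n (\<lambda>i. frame_u \<gamma> i s) (dual_curve e n \<gamma> s) \<and> frame_det e (Vx n (\<lambda>i. frame_u \<gamma> i s) (dual_curve e n \<gamma> s)) = 1"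
  unfolding dual_eq by (rule theI'[OF linalg.ex1[OF lin]])

lemma dual_uniq: "s \<in> I \<Longrightarrow> orthox n (\<lambda>i. frame_u \<gamma> i s) w \<Longrightarrow> frame_det e (Vx n (\<lambda>i. frame_u \<gamma> i s) w) = 1 \<Longrightarrow> dual_curve e n \<gamma> s = w"
  using linalg.ex1[OF lin] dual_ok by metis

lemma dual_unit: "s \<in> I \<Longrightarrow> norm (dual_curve e n \<gamma> s) = 1"
  using dual_ok by (simp add: orthox_def)

lemma cont_u: "i < n \<Longrightarrow> s \<in> I \<Longrightarrow> continuous (at s) (frame_u \<gamma> i)"
  using smooth_continuous[OF sm_u] I by (simp add: continuous_on_eq_continuous_at)

lemma dual_cont:
  assumes s0: "s0 \<in> I"
  shows "\<exists>g d. d > 0 \<and> ball s0 d \<subseteq> I \<and> continuous (at s0) g \<and> g s0 = dual_curve e n \<gamma> s0 \<and>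
           (\<forall>s\<in>ball s0 d. dual_curve e n \<gamma> s = g s)"
proof -
  define d0 where "d0 = dual_curve e n \<gamma> s0"
  define q where "q s = d0 - (\<Sum>i<n. (d0 \<bullet> frame_u \<gamma> i s) *\<^sub>R frame_u \<gamma> i s)" for s
  define g where "g s = (1 / norm (q s)) *\<^sub>R q s" for s
  have d0o: "d0 \<bullet> frame_u \<gamma> i s0 = 0" if "i < n" for i
    using dual_ok[OF s0] that by (simp add: orthox_def d0_def inner_commute)
  have qs0: "q s0 = d0" by (simp add: q_def d0o)
  have nd0: "norm d0 = 1" using dual_unit[OF s0] by (simp add: d0_def)
  have cq: "continuous (at s0) q"
    unfolding q_def by (intro continuous_intros cont_u s0) auto
  have cg: "continuous (at s0) g"
    unfolding g_def using qs0 nd0 by (intro continuous_intros cq) auto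
  have gs0: "g s0 = d0" by (simp add: g_def qs0 nd0)
  have qorth: "frame_u \<gamma> j s \<bullet> q s = 0" if "s \<in> I" "j < n" for s j
  proof -
    have "frame_u \<gamma> j s \<bullet> (\<Sum>i<n. (d0 \<bullet> frame_u \<gamma> i s) *\<^sub>R frame_u \<gamma> i s)
        = (\<Sum>i<n. (d0 \<bullet> frame_u \<gamma> i s) * (if j = i then 1 else 0))"
      unfolding inner_sum_right
      by (rule sum.cong) (use ON[of "n - 1"] that n1 in auto)
    also have "\<dots> = d0 \<bullet> frame_u \<gamma> j s" using that by (simp add: if_distrib cong: if_cong)
    finally show ?thesis by (simp add: q_def inner_diff_right inner_commute)
  qed
  define D where "D s = frame_det e (\<lambda>k. if k \<le> n then Vx n (\<lambda>i. frame_u \<gamma> i s) (g s) k else 0)" for s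
  have Deq: "D s = frame_det e (Vx n (\<lambda>i. frame_u \<gamma> i s) (g s))" for s
    unfolding D_def by (rule frame_det_cong[OF card bij]) simp
  have cD: "continuous (at s0) D"
    unfolding D_def
  proof (rule cont_frame_det)
    fix k
    show "continuous (at s0) (\<lambda>s. if k \<le> n then Vx n (\<lambda>i. frame_u \<gamma> i s) (g s) k else 0)"
      by (cases "k \<le> n"; cases "k = n") (auto simp: Vx_def cg intro: cont_u s0)
  qed
  have Ds0: "D s0 = 1" using dual_ok[OF s0] by (simp add: Deq gs0 d0_def)
  obtain d1 where d1: "d1 > 0" "\<And>s. dist s s0 < d1 \<Longrightarrow> dist (D s) (D s0) < 1"
    using cD unfolding continuous_at_eps_delta by (meson zero_less_one)
  obtain d2 where d2: "d2 > 0" "\<And>s. dist s s0 < d2 \<Longrightarrow> dist (q s) (q s0) < 1"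
    using cq unfolding continuous_at_eps_delta by (meson zero_less_one)
  obtain d3 where d3: "d3 > 0" "ball s0 d3 \<subseteq> I" using I s0 open_contains_ball by blast
  define d where "d = min d1 (min d2 d3)"
  have "\<forall>s\<in>ball s0 d. dual_curve e n \<gamma> s = g s"
  proof
    fix s assume s: "s \<in> ball s0 d"
    then have sI: "s \<in> I" and ds: "dist s s0 < d1" "dist s s0 < d2"
      using d3 by (auto simp: d_def dist_commute)
    have "q s \<noteq> 0"
    proof
      assume "q s = 0" then show False using d2(2)[OF ds(2)] qs0 nd0 by (simp add: dist_norm)
    qed
    then have og: "orthox n (\<lambda>i. frame_u \<gamma> i s) (g s)"
      unfolding orthox_def g_def using qorth[OF sI] by (simp add: inner_commute)
    have "D s > 0" using d1(2)[OF ds(1)] Ds0 by (simp add: dist_real_def)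
    then have "frame_det e (Vx n (\<lambda>i. frame_u \<gamma> i s) (g s)) = 1"
      using linalg.det_pm[OF lin[OF sI] og] by (auto simp: Deq)
    then show "dual_curve e n \<gamma> s = g s" by (rule dual_uniq[OF sI og])
  qed
  moreover have "ball s0 d \<subseteq> I" using d3 by (auto simp: d_def)
  moreover have "d > 0" using d1 d2 d3 by (simp add: d_def)
  ultimately show ?thesis using cg gs0 d0_def by blast
qed

end


lemma nsq: "(norm (x::'a::real_inner))\<^sup>2 = x \<bullet> x" by (simp add: power2_norm_eq_inner)

lemma unit_pm:
  fixes P u :: "'a::real_inner"
  assumes "norm P = 1" "norm u = 1" "\<bar>P \<bullet> u\<bar> = 1"
  shows "P = u \<or> P = - u"
proof -
  have P1: "P \<bullet> P = 1" and u1: "u \<bullet> u = 1" using assms by (simp_all add: norm_eq_1)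
  have t2: "(P \<bullet> u) * (P \<bullet> u) = 1" using assms(3) by (metis abs_mult_self_eq mult_1_left)
  have "(P - (P \<bullet> u) *\<^sub>R u) \<bullet> (P - (P \<bullet> u) *\<^sub>R u) = P \<bullet> P - 2 * (P \<bullet> u) * (P \<bullet> u) + (P \<bullet> u) * (P \<bullet> u) * (u \<bullet> u)"
    by (simp add: algebra_simps inner_commute)
  also have "\<dots> = 0" using P1 u1 t2 by simp
  finally have "P = (P \<bullet> u) *\<^sub>R u" by simp
  moreover have "P \<bullet> u = 1 \<or> P \<bullet> u = -1" using assms(3) by linarith
  ultimately show ?thesis by auto
qed

lemma ped_identity:
  fixes P u :: "real^'n::finite"
  assumes P: "norm P = 1" and u: "norm u = 1"
  shows "(1 / sqrt (1 - (P \<bullet> u)\<^sup>2)) *\<^sub>R (P - (P \<bullet> u) *\<^sub>R u)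
       = (1 / norm (P + (P - (2 * (P \<bullet> u)) *\<^sub>R u))) *\<^sub>R (P + (P - (2 * (P \<bullet> u)) *\<^sub>R u))"
proof -
  let ?t = "P \<bullet> u" let ?w = "P - ?t *\<^sub>R u"
  have P1: "P \<bullet> P = 1" and u1: "u \<bullet> u = 1" using assms by (simp_all add: norm_eq_1)
  have e1: "P + (P - (2 * ?t) *\<^sub>R u) = 2 *\<^sub>R ?w" by (simp add: vec_eq_iff algebra_simps)
  have "?w \<bullet> ?w = P \<bullet> P - 2 * ?t * ?t + ?t * ?t * (u \<bullet> u)"
    by (simp add: algebra_simps inner_commute)
  then have "?w \<bullet> ?w = 1 - ?t\<^sup>2" using P1 u1 by (simp add: power2_eq_square)
  then have nw: "norm ?w = sqrt (1 - ?t\<^sup>2)" by (simp add: norm_eq_sqrt_inner)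
  show ?thesis unfolding e1 by (simp add: nw)
qed

lemma ped_germ:
  fixes P u0 :: "real^'n::finite"
  assumes P: "norm P = 1" and u: "norm u0 = 1" and t: "\<bar>P \<bullet> u0\<bar> < 1"
  shows "sphere_diffeo_germ (\<lambda>x. (1 / norm (P + x)) *\<^sub>R (P + x))
          (P - (2 * (P \<bullet> u0)) *\<^sub>R u0) ((1 / sqrt (1 - (P \<bullet> u0)\<^sup>2)) *\<^sub>R (P - (P \<bullet> u0) *\<^sub>R u0))"
proof -
  let ?t = "P \<bullet> u0"
  define \<psi> where "\<psi> x = (1 / norm (P + x)) *\<^sub>R (P + x)" for x :: "real^'n"
  define \<phi> where "\<phi> y = (2 * (P \<bullet> y)) *\<^sub>R y - P" for y :: "real^'n"
  define U where "U = {x::real^'n. P \<bullet> x > -1}"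
  define V where "V = {y::real^'n. P \<bullet> y > 0}"
  define p where "p = P - (2 * ?t) *\<^sub>R u0"
  define r where "r = sqrt (1 - ?t\<^sup>2)"
  define q where "q = (1 / r) *\<^sub>R (P - ?t *\<^sub>R u0)"
  have P1: "P \<bullet> P = 1" and u1: "u0 \<bullet> u0 = 1" using P u by (simp_all add: norm_eq_1)
  have t2: "?t\<^sup>2 < 1" using t by (simp add: abs_square_less_1)
  have r0: "r > 0" using t2 by (simp add: r_def)
  have rr: "r * r = 1 - ?t\<^sup>2" using t2 by (simp add: r_def)
  have oU: "open U" unfolding U_def by (rule open_halfspace_gt)
  have oV: "open V" unfolding V_def by (rule open_halfspace_gt)
  have Pp: "P \<bullet> p = 1 - 2 * ?t * ?t" by (simp add: p_def inner_diff_right P1)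
  have pU: "p \<in> U" using Pp t2 by (simp add: U_def power2_eq_square)
  have Pq: "P \<bullet> q = r"
  proof -
    have "P \<bullet> q = (1 - ?t * ?t) / r" by (simp add: q_def inner_diff_right P1)
    also have "\<dots> = r" using rr r0 by (simp add: power2_eq_square field_simps)
    finally show ?thesis .
  qed
  have qV: "q \<in> V" using Pq r0 by (simp add: V_def)
  have nz: "P + x \<noteq> 0" if "x \<in> U" for x
  proof
    assume "P + x = 0" then have "x = - P" by (simp add: add_eq_0_iff)
    then show False using that P1 by (simp add: U_def)
  qed
  have sm\<psi>: "smooth_on U \<psi>"
  proof (rule smooth_cong[OF oU _ smooth_scaleR[OF oU smooth_inverse[OF oU smooth_sqrt[OF oU smooth_inner[OF oU]]]]])
    show "smooth_on U (\<lambda>x. P + x)" by (intro smooth_add smooth_const smooth_ident oU)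
    then show "smooth_on U (\<lambda>x. P + x)" .
    show "smooth_on U (\<lambda>x. P + x)" by fact
    show "(P + x) \<bullet> (P + x) > 0" if "x \<in> U" for x using nz[OF that] by simp
    show "sqrt ((P + x) \<bullet> (P + x)) \<noteq> 0" if "x \<in> U" for x using nz[OF that] by simp
    show "inverse (sqrt ((P + x) \<bullet> (P + x))) *\<^sub>R (P + x) = \<psi> x" for x
      by (simp add: \<psi>_def norm_eq_sqrt_inner divide_inverse)
  qed
  have sm\<phi>: "smooth_on V \<phi>"
    unfolding \<phi>_def[abs_def]
    by (intro smooth_diff smooth_scaleR smooth_mult smooth_inner smooth_const smooth_ident oV)
  have \<psi>p: "\<psi> p = q"
    unfolding \<psi>_def p_def q_def r_def using ped_identity[OF P u] by simp
  have \<phi>q: "\<phi> q = p"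
  proof -
    have "(2 * (P \<bullet> q)) *\<^sub>R q = 2 *\<^sub>R (P - ?t *\<^sub>R u0)"
      using r0 unfolding Pq by (simp add: q_def)
    then show ?thesis by (simp add: \<phi>_def p_def vec_eq_iff algebra_simps)
  qed
  have \<psi>im: "\<psi> x \<in> V \<inter> sphere 0 1" and \<phi>\<psi>: "\<phi> (\<psi> x) = x" if "x \<in> U \<inter> sphere 0 1" for x
  proof -
    have x1: "x \<bullet> x = 1" using that by (simp add: norm_eq_1)
    define m where "m = norm (P + x)"
    have m0: "m > 0" using nz that by (simp add: m_def)
    have mm: "m * m = 2 * (1 + P \<bullet> x)"
      unfolding m_def power2_eq_square[symmetric] nsq using x1 P1 by (simp add: inner_add_left inner_add_right inner_commute)
    have "P \<bullet> \<psi> x = (1 + P \<bullet> x) / m" by (simp add: \<psi>_def m_def inner_add_right P1)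
    also have "\<dots> = m / 2" using mm m0 by (simp add: field_simps)
    finally have Pps: "P \<bullet> \<psi> x = m / 2" .
    have "P \<bullet> \<psi> x > 0" using Pps m0 by simp
    moreover have "norm (\<psi> x) = 1" using nz[of x] that by (simp add: \<psi>_def)
    ultimately show "\<psi> x \<in> V \<inter> sphere 0 1" by (simp add: V_def)
    show "\<phi> (\<psi> x) = x" using m0 by (simp add: \<phi>_def Pps) (simp add: \<psi>_def m_def[symmetric])
  qed
  have \<phi>im: "\<phi> y \<in> U \<inter> sphere 0 1" and \<psi>\<phi>: "\<psi> (\<phi> y) = y" if "y \<in> V \<inter> sphere 0 1" for y
  proof -
    have y1: "y \<bullet> y = 1" using that by (simp add: norm_eq_1)
    define a where "a = P \<bullet> y"
    have a0: "a > 0" using that by (simp add: V_def a_def)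
    have e: "P + \<phi> y = (2 * a) *\<^sub>R y" by (simp add: \<phi>_def a_def)
    have n\<phi>: "\<phi> y \<bullet> \<phi> y = 1"
      by (simp add: \<phi>_def algebra_simps inner_commute y1 P1 a_def[symmetric])
    have P\<phi>: "P \<bullet> \<phi> y = 2 * a * a - 1" by (simp add: \<phi>_def inner_diff_right P1 a_def)
    show "\<phi> y \<in> U \<inter> sphere 0 1" using n\<phi> P\<phi> a0
      by (simp add: U_def norm_eq_1)
    have "norm (P + \<phi> y) = 2 * a" using a0 that by (simp add: e)
    then show "\<psi> (\<phi> y) = y" using a0 by (simp add: \<psi>_def e)
  qed
  show ?thesis
    unfolding sphere_diffeo_germ_def
    apply (rule exI[of _ U], rule exI[of _ V], rule exI[of _ \<phi>])
    using oU oV pU qV sm\<psi> sm\<phi> \<psi>p \<phi>q \<psi>im \<phi>im \<phi>\<psi> \<psi>\<phi>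
    unfolding \<psi>_def[symmetric] p_def[symmetric] q_def[symmetric] r_def[symmetric]
    by blast
qed



lemma sigma_abs: "(\<sigma>::real) = 1 \<or> \<sigma> = -1 \<Longrightarrow> \<sigma> * a > 0 \<Longrightarrow> \<sigma> * a = \<bar>a\<bar>"
  by auto

lemma dual_identity:
  fixes P u :: "real^'n::finite"
  assumes P: "norm P = 1" and u: "norm u = 1" and sg: "\<sigma> = 1 \<or> \<sigma> = -1" and pos: "\<sigma> * (P \<bullet> u) > 0"
  shows "(\<sigma> / sqrt (2 - 2 * (P \<bullet> (P - (2 * (P \<bullet> u)) *\<^sub>R u)))) *\<^sub>R (P - (P - (2 * (P \<bullet> u)) *\<^sub>R u)) = u"
proof -
  let ?t = "P \<bullet> u"
  have P1: "P \<bullet> P = 1" using P by (simp add: norm_eq_1)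
  have e: "2 - 2 * (P \<bullet> (P - (2 * ?t) *\<^sub>R u)) = (2 * ?t)\<^sup>2"
    by (simp add: inner_diff_right P1 power2_eq_square)
  have s: "sqrt (2 - 2 * (P \<bullet> (P - (2 * ?t) *\<^sub>R u))) = 2 * \<bar>?t\<bar>"
    unfolding e real_sqrt_abs by (simp add: abs_mult)
  have "\<sigma> * ?t = \<bar>?t\<bar>" using sigma_abs[OF sg pos] .
  moreover have "\<bar>?t\<bar> > 0" using pos sg by auto
  ultimately have c: "\<sigma> / (2 * \<bar>?t\<bar>) * (2 * ?t) = 1" by (simp add: field_simps)
  have "(\<sigma> / sqrt (2 - 2 * (P \<bullet> (P - (2 * ?t) *\<^sub>R u)))) *\<^sub>R (P - (P - (2 * ?t) *\<^sub>R u))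
      = (\<sigma> / (2 * \<bar>?t\<bar>) * (2 * ?t)) *\<^sub>R u"
  proof -
    have "P - (P - (2 * ?t) *\<^sub>R u) = (2 * ?t) *\<^sub>R u" by simp
    then show ?thesis unfolding s by (simp only: scaleR_scaleR)
  qed
  also have "\<dots> = u" by (simp only: c scaleR_one)
  finally show ?thesis .
qed

lemma dual_germ:
  fixes P :: "real^'n::finite"
  assumes P: "norm P = 1" and sg: "\<sigma> = 1 \<or> \<sigma> = -1"
  shows "sphere_diffeo_germ (\<lambda>x. (\<sigma> / sqrt (2 - 2 * (P \<bullet> x))) *\<^sub>R (P - x)) (- P) (\<sigma> *\<^sub>R P)"
proof -
  define \<psi> where "\<psi> x = (\<sigma> / sqrt (2 - 2 * (P \<bullet> x))) *\<^sub>R (P - x)" for x :: "real^'n"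
  define \<phi> where "\<phi> y = P - (2 * (P \<bullet> y)) *\<^sub>R y" for y :: "real^'n"
  define U where "U = {x::real^'n. P \<bullet> x < 1}"
  define V where "V = {y::real^'n. (\<sigma> *\<^sub>R P) \<bullet> y > 0}"
  have P1: "P \<bullet> P = 1" using P by (simp add: norm_eq_1)
  have ss: "\<sigma> * \<sigma> = 1" using sg by auto
  have sq: "\<sigma> * (\<sigma> - \<sigma> * a) = 1 - a" for a
  proof -
    have "\<sigma> * (\<sigma> - \<sigma> * a) = (\<sigma> * \<sigma>) - (\<sigma> * \<sigma>) * a" by (simp add: algebra_simps)
    then show ?thesis using ss by simp
  qed
  have oU: "open U" unfolding U_def by (rule open_halfspace_lt)
  have oV: "open V" unfolding V_def by (rule open_halfspace_gt)
  have pU: "- P \<in> U" by (simp add: U_def P1)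
  have qV: "\<sigma> *\<^sub>R P \<in> V" using ss by (simp add: V_def P1)
  have pos: "2 - 2 * (P \<bullet> x) > 0" if "x \<in> U" for x using that by (simp add: U_def)
  have sm\<psi>: "smooth_on U \<psi>"
  proof (rule smooth_cong[OF oU _ smooth_scaleR[OF oU smooth_mult[OF oU smooth_const[OF oU]
           smooth_inverse[OF oU smooth_sqrt[OF oU smooth_diff[OF oU smooth_const[OF oU]
              smooth_mult[OF oU smooth_const[OF oU] smooth_inner[OF oU smooth_const[OF oU] smooth_ident[OF oU]]]]]]]
           smooth_diff[OF oU smooth_const[OF oU] smooth_ident[OF oU]]]])
    show "2 - 2 * (P \<bullet> x) > 0" if "x \<in> U" for x using pos[OF that] .
    show "sqrt (2 - 2 * (P \<bullet> x)) \<noteq> 0" if "x \<in> U" for x using pos[OF that] by simp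
    show "(\<sigma> * inverse (sqrt (2 - 2 * (P \<bullet> x)))) *\<^sub>R (P - x) = \<psi> x" for x
      by (simp add: \<psi>_def divide_inverse)
  qed
  have sm\<phi>: "smooth_on V \<phi>"
    unfolding \<phi>_def[abs_def]
    by (intro smooth_diff smooth_scaleR smooth_mult smooth_inner smooth_const smooth_ident oV)
  have \<psi>p: "\<psi> (- P) = \<sigma> *\<^sub>R P"
  proof -
    have "sqrt (2 - 2 * (P \<bullet> - P)) = 2" using P1 by simp
    then show ?thesis by (simp add: \<psi>_def scaleR_2[symmetric])
  qed
  have \<phi>q: "\<phi> (\<sigma> *\<^sub>R P) = - P"
    using ss by (simp add: \<phi>_def P1 vec_eq_iff algebra_simps)
  have \<psi>im: "\<psi> x \<in> V \<inter> sphere 0 1" and \<phi>\<psi>: "\<phi> (\<psi> x) = x" if "x \<in> U \<inter> sphere 0 1" for x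
  proof -
    have x1: "x \<bullet> x = 1" using that by (simp add: norm_eq_1)
    define m where "m = sqrt (2 - 2 * (P \<bullet> x))"
    have px: "2 - 2 * (P \<bullet> x) > 0" using pos[of x] that by simp
    have m0: "m > 0" using px by (simp add: m_def)
    have mm: "m * m = 2 - 2 * (P \<bullet> x)" using px by (simp add: m_def)
    have "(P - x) \<bullet> (P - x) = 2 - 2 * (P \<bullet> x)"
      using x1 P1 by (simp add: inner_diff_left inner_diff_right inner_commute)
    then have nPx: "norm (P - x) = m" by (simp add: m_def norm_eq_sqrt_inner)
    have psi: "\<psi> x = (\<sigma> / m) *\<^sub>R (P - x)" by (simp add: \<psi>_def m_def)
    have "norm (\<psi> x) = 1" using sg m0 nPx by (auto simp: psi)
    moreover have "(\<sigma> *\<^sub>R P) \<bullet> \<psi> x = (1 - P \<bullet> x) / m"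
      using sq by (simp add: psi inner_diff_right P1)
    moreover have "(1 - P \<bullet> x) / m > 0" using pos that m0 by simp
    ultimately show "\<psi> x \<in> V \<inter> sphere 0 1" by (simp add: V_def)
    have Pps: "P \<bullet> \<psi> x = \<sigma> * m / 2"
    proof -
      have "P \<bullet> \<psi> x = \<sigma> * (1 - P \<bullet> x) / m" by (simp add: psi inner_diff_right P1)
      also have "\<dots> = \<sigma> * (m * m / 2) / m"
      proof -
        have "1 - P \<bullet> x = m * m / 2" using mm by simp
        then show ?thesis by (simp only:)
      qed
      also have "\<dots> = \<sigma> * m / 2" using m0 by (simp add: field_simps)
      finally show ?thesis .
    qed
    have "(2 * (P \<bullet> \<psi> x)) *\<^sub>R \<psi> x = P - x"
      unfolding Pps using sg m0 by (auto simp: psi)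
    then show "\<phi> (\<psi> x) = x" by (simp add: \<phi>_def)
  qed
  have \<phi>im: "\<phi> y \<in> U \<inter> sphere 0 1" and \<psi>\<phi>: "\<psi> (\<phi> y) = y" if "y \<in> V \<inter> sphere 0 1" for y
  proof -
    have y1: "y \<bullet> y = 1" and ny: "norm y = 1" using that by (simp_all add: norm_eq_1)
    define a where "a = P \<bullet> y"
    have a0: "\<sigma> * a > 0" using that by (simp add: V_def a_def)
    then have "a \<noteq> 0" by auto
    have n\<phi>: "\<phi> y \<bullet> \<phi> y = 1"
      by (simp add: \<phi>_def algebra_simps inner_commute y1 P1 a_def[symmetric])
    have P\<phi>: "P \<bullet> \<phi> y = 1 - 2 * a * a" by (simp add: \<phi>_def inner_diff_right P1 a_def)
    have "a * a > 0" using \<open>a \<noteq> 0\<close> by (auto simp: zero_less_mult_iff linorder_neq_iff)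
    then show "\<phi> y \<in> U \<inter> sphere 0 1" using n\<phi> P\<phi> by (simp add: U_def norm_eq_1)
    show "\<psi> (\<phi> y) = y" unfolding \<psi>_def \<phi>_def
      by (rule dual_identity[OF P ny sg]) (use a0 a_def in simp)
  qed
  show ?thesis
    unfolding sphere_diffeo_germ_def
    apply (rule exI[of _ U], rule exI[of _ V], rule exI[of _ \<phi>])
    using oU oV pU qV sm\<psi> sm\<phi> \<psi>p \<phi>q \<psi>im \<phi>im \<phi>\<psi> \<psi>\<phi>
    unfolding \<psi>_def[symmetric]
    by blast
qed



theorem theorem1:
  fixes n :: nat and I :: "real set" and \<gamma> :: "real \<Rightarrow> real^'n::finite"
    and e :: "nat \<Rightarrow> 'n" and P :: "real^'n" and s0 :: real
  assumes "n \<ge> 2"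
    and "CARD('n) = n + 1"
    and "bij_betw e {0..n} (UNIV :: 'n set)"
    and "open I" and "is_interval I"
    and "spherical_unit_speed_curve n I \<gamma>"
    and "norm P = 1"
    and "s0 \<in> I"
  shows "(P \<noteq> dual_curve e n \<gamma> s0 \<and> P \<noteq> - dual_curve e n \<gamma> s0 \<longrightarrow>
            (\<exists>\<epsilon>>0. ball s0 \<epsilon> \<subseteq> I \<and>
               (\<forall>s\<in>ball s0 \<epsilon>. P \<bullet> dual_curve e n \<gamma> s \<noteq> 1 \<and> P \<bullet> dual_curve e n \<gamma> s \<noteq> -1)) \<and>
            L_equivalent_germs (orthotomic e n \<gamma> P) (pedal e n \<gamma> P) s0)
       \<and> ((P = dual_curve e n \<gamma> s0 \<or> P = - dual_curve e n \<gamma> s0) \<longrightarrow>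
            L_equivalent_germs (orthotomic e n \<gamma> P) (dual_curve e n \<gamma>) s0)"
proof -
  note sus = assms(6)[unfolded spherical_unit_speed_curve_def]
  interpret S: setting \<gamma> I n e
    unfolding setting_def frenet_def setting_axioms_def using sus assms by auto
  have P: "norm P = 1" by fact
  have s0: "s0 \<in> I" by fact
  let ?u = "dual_curve e n \<gamma>"
  obtain g d where gd: "d > 0" "ball s0 d \<subseteq> I" "continuous (at s0) g" "g s0 = ?u s0"
      "\<forall>s\<in>ball s0 d. ?u s = g s"
    using S.dual_cont[OF s0] by blast
  have uI: "norm (?u s) = 1" if "s \<in> I" for s using S.dual_unit[OF that] .
  have ort: "orthotomic e n \<gamma> P s = P - (2 * (P \<bullet> ?u s)) *\<^sub>R ?u s" for s
    by (simp add: orthotomic_def Let_def)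
  have ped: "pedal e n \<gamma> P s = (1 / sqrt (1 - (P \<bullet> ?u s)\<^sup>2)) *\<^sub>R (P - (P \<bullet> ?u s) *\<^sub>R ?u s)" for s
    by (simp add: pedal_def Let_def)
  have cPg: "continuous (at s0) (\<lambda>s. P \<bullet> g s)" by (intro continuous_intros gd(3))
  have part1: "(\<exists>\<epsilon>>0. ball s0 \<epsilon> \<subseteq> I \<and>
               (\<forall>s\<in>ball s0 \<epsilon>. P \<bullet> ?u s \<noteq> 1 \<and> P \<bullet> ?u s \<noteq> -1)) \<and>
            L_equivalent_germs (orthotomic e n \<gamma> P) (pedal e n \<gamma> P) s0"
    if ne: "P \<noteq> ?u s0 \<and> P \<noteq> - ?u s0"
  proof -
    have u0: "norm (?u s0) = 1" using uI[OF s0] .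
    have le: "\<bar>P \<bullet> ?u s0\<bar> \<le> 1" using Cauchy_Schwarz_ineq2[of P "?u s0"] P u0 by simp
    have "\<bar>P \<bullet> ?u s0\<bar> \<noteq> 1" using unit_pm[OF P u0] ne by blast
    with le have t: "\<bar>P \<bullet> ?u s0\<bar> < 1" by simp
    obtain d' where d': "d' > 0" "\<And>s. dist s s0 < d' \<Longrightarrow> dist (P \<bullet> g s) (P \<bullet> g s0) < 1 - \<bar>P \<bullet> ?u s0\<bar>"
      using cPg t unfolding continuous_at_eps_delta by (meson diff_gt_0_iff_gt)
    define \<epsilon> where "\<epsilon> = min d d'"
    have A: "\<exists>\<epsilon>>0. ball s0 \<epsilon> \<subseteq> I \<and> (\<forall>s\<in>ball s0 \<epsilon>. P \<bullet> ?u s \<noteq> 1 \<and> P \<bullet> ?u s \<noteq> -1)"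
    proof (intro exI[of _ \<epsilon>] conjI ballI)
      show "\<epsilon> > 0" using gd(1) d'(1) by (simp add: \<epsilon>_def)
      show "ball s0 \<epsilon> \<subseteq> I" using gd(2) by (auto simp: \<epsilon>_def)
      fix s assume s: "s \<in> ball s0 \<epsilon>"
      then have "?u s = g s" "dist s s0 < d'" using gd(5) by (auto simp: \<epsilon>_def dist_commute)
      then have "\<bar>P \<bullet> ?u s - P \<bullet> ?u s0\<bar> < 1 - \<bar>P \<bullet> ?u s0\<bar>" using d'(2) gd(4) by (simp add: dist_real_def)
      then have "\<bar>P \<bullet> ?u s\<bar> < 1" by linarith
      then show "P \<bullet> ?u s \<noteq> 1" "P \<bullet> ?u s \<noteq> -1" by auto
    qed
    have B: "L_equivalent_germs (orthotomic e n \<gamma> P) (pedal e n \<gamma> P) s0"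
      unfolding L_equivalent_germs_def
    proof (rule exI[where x="\<lambda>x. (1 / norm (P + x)) *\<^sub>R (P + x)"], rule conjI)
      show "sphere_diffeo_germ (\<lambda>x. (1 / norm (P + x)) *\<^sub>R (P + x)) (orthotomic e n \<gamma> P s0) (pedal e n \<gamma> P s0)"
        unfolding ort ped using ped_germ[OF P u0 t] by simp
      show "\<exists>\<epsilon>>0. \<forall>s\<in>ball s0 \<epsilon>. pedal e n \<gamma> P s = (1 / norm (P + orthotomic e n \<gamma> P s)) *\<^sub>R (P + orthotomic e n \<gamma> P s)"
      proof (intro exI[of _ d] conjI ballI)
        show "d > 0" by fact
        fix s assume "s \<in> ball s0 d"
        then have "s \<in> I" using gd(2) by blast
        show "pedal e n \<gamma> P s = (1 / norm (P + orthotomic e n \<gamma> P s)) *\<^sub>R (P + orthotomic e n \<gamma> P s)"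
          unfolding ort ped using ped_identity[OF P uI[OF \<open>s \<in> I\<close>]] by simp
      qed
    qed
    show ?thesis using A B by blast
  qed
  have part2: "L_equivalent_germs (orthotomic e n \<gamma> P) ?u s0"
    if eq: "P = ?u s0 \<or> P = - ?u s0"
  proof -
    define \<sigma> :: real where "\<sigma> = (if P = ?u s0 then 1 else -1)"
    have sg: "\<sigma> = 1 \<or> \<sigma> = -1" by (simp add: \<sigma>_def)
    have u0: "?u s0 = \<sigma> *\<^sub>R P" using eq by (auto simp: \<sigma>_def)
    have P1: "P \<bullet> P = 1" using P by (simp add: norm_eq_1)
    have ss: "\<sigma> * \<sigma> = 1" using sg by auto
    have o0: "orthotomic e n \<gamma> P s0 = - P"
      using sg by (auto simp: ort u0 P1 vec_eq_iff algebra_simps)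
    have cs: "continuous (at s0) (\<lambda>s. \<sigma> * (P \<bullet> g s))" by (intro continuous_intros cPg)
    have v0: "\<sigma> * (P \<bullet> g s0) = 1" using ss by (simp add: gd(4) u0 P1)
    obtain d' where d': "d' > 0" "\<And>s. dist s s0 < d' \<Longrightarrow> dist (\<sigma> * (P \<bullet> g s)) (\<sigma> * (P \<bullet> g s0)) < 1"
      using cs unfolding continuous_at_eps_delta by (meson zero_less_one)
    show ?thesis
      unfolding L_equivalent_germs_def
    proof (rule exI[where x="\<lambda>x. (\<sigma> / sqrt (2 - 2 * (P \<bullet> x))) *\<^sub>R (P - x)"], rule conjI)
      show "sphere_diffeo_germ (\<lambda>x. (\<sigma> / sqrt (2 - 2 * (P \<bullet> x))) *\<^sub>R (P - x)) (orthotomic e n \<gamma> P s0) (?u s0)"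
        unfolding o0 u0 by (rule dual_germ[OF P sg])
      show "\<exists>\<epsilon>>0. \<forall>s\<in>ball s0 \<epsilon>. ?u s = (\<sigma> / sqrt (2 - 2 * (P \<bullet> orthotomic e n \<gamma> P s))) *\<^sub>R (P - orthotomic e n \<gamma> P s)"
      proof (intro exI[of _ "min d d'"] conjI ballI)
        show "min d d' > 0" using gd(1) d'(1) by simp
        fix s assume s: "s \<in> ball s0 (min d d')"
        then have sI: "s \<in> I" and us: "?u s = g s" and ds: "dist s s0 < d'"
          using gd(2,5) by (auto simp: dist_commute)
        have "\<sigma> * (P \<bullet> ?u s) > 0" using d'(2)[OF ds] v0 us by (simp add: dist_real_def)
        then show "?u s = (\<sigma> / sqrt (2 - 2 * (P \<bullet> orthotomic e n \<gamma> P s))) *\<^sub>R (P - orthotomic e n \<gamma> P s)"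
          unfolding ort using dual_identity[OF P uI[OF sI] sg] by simp
      qed
    qed
  qed
  show ?thesis using part1 part2 by blast
qed


end
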